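(* Let $F$, $H$, $X$, $\Omega$, $Q$ and the sequences generated by the IneIREG method be as described in the context. Suppose $\eta_k\equiv\eta>0$ for all $k\ge0$; $\alpha_0\in[0,1]$ and $(\alpha_k)_{k\ge0}$ is nonincreasing; $\lambda_k\in[\underline\lambda,\overline\lambda]$ for all $k\ge0$ with $0<\underline\lambda\le\overline\lambda\le1/(L_F+\eta L_H)$; and $\hat s:=\sum_{k=0}^\infty\delta_k<+\infty$. For $k\ge1$ let $\Lambda_k=\sum_{j=0}^{k-1}\lambda_j$ and $\overline y_k=\Lambda_k^{-1}\sum_{j=0}^{k-1}\lambda_jy_j$. Then: (a) for all $k\ge1$, $-B_H\,\mathrm{dist}(\overline y_k,Q)\le\mathrm{Gap}(\overline y_k,H,Q)\le \frac1k\Big(\frac{D_X^2+\hat s}{2\underline\lambda\eta}\Big)$; (b) for all $k\ge1$, $0\le\mathrm{Gap}(\overline y_k,F,X)\le\frac1k\Big(\frac{D_X^2+\hat s}{2\underline\lambda}\Big)+\eta\Big(\frac{\overline\lambda C_HD_X}{\underline\lambda}\Big)$; (c) if $Q$ is $\sigma$-weakly sharp of order $\mathcal M\ge1$, then for all $k\ge1$, $\mathrm{Gap}(\overline y_k,H,Q)\ge-\frac{B_H}{\sigma^{1/\mathcal M}}\Big(\frac1k\Big(\frac{D_X^2+\hat s}{2\underline\lambda}\Big)+\eta\Big(\frac{\overline\lambda C_HD_X}{\underline\lambda}\Big)\Big)^{1/\mathcal M}$.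
   Context: Work in $\mathbb{R}^n$ with Euclidean inner product $\langle\cdot,\cdot\rangle$ and norm $\|\cdot\|$. The maps $F\colon \mathrm{Dom}\,F\to\mathbb{R}^n$ and $H\colon\mathrm{Dom}\,H\to\mathbb{R}^n$ are monotone and Lipschitz continuous with constants $L_F>0$ and $L_H>0$. $X$ is a nonempty compact convex set and $\Omega$ a nonempty closed convex set with $X\subset\Omega\subset\mathrm{Dom}\,F\cap\mathrm{Dom}\,H$; $P_X,P_\Omega$ denote orthogonal projections. $Q:=\{x\in X:\langle F(x),y-x\rangle\ge0\ \forall y\in X\}$ is assumed nonempty. $D_X:=\sup_{x,y\in X}\|x-y\|$, $C_H:=\sup_{x\in X}\|H(x)\|$, $B_H:=\sup_{x\in Q}\|H(x)\|$, $\mathrm{dist}(y,Q)$ is the Euclidean distance to $Q$. $\mathrm{Gap}(z,H,Q):=\sup_{x\in Q}\langle H(x),z-x\rangle$, $\mathrm{Gap}(z,F,X):=\sup_{x\in X}\langle F(x),z-x\rangle$. $Q$ is $\sigma$-weakly sharp of order $\mathcal M\ge1$ ($\sigma>0$) if $\langle F(x),y-x\rangle\ge\sigma\,\mathrm{dist}(y,Q)^{\mathcal M}$ for all $x\in Q$, $y\in X$. IneIREG method: start with $x_0=x_{-1}\in X$; for $k=0,1,\dots$, with parameters $\alpha_k\ge0$, $\lambda_k>0$, $\eta_k>0$, set $w_k=x_k+\alpha_k(x_k-x_{k-1})$, $w'_k=P_\Omega(w_k)$, $y_k=P_X\big(w_k-\lambda_k(F(w'_k)+\eta_kH(w'_k))\big)$,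 $x_{k+1}=P_X\big(w_k-\lambda_k(F(y_k)+\eta_kH(y_k))\big)$. Also $\delta_k:=\alpha_k(1+\alpha_k)\|x_k-x_{k-1}\|^2$ for $k\ge0$. *)

theory Defs
  imports "HOL-Analysis.Analysis"
begin

definition monotone_op :: "'a::real_inner set \<Rightarrow> ('a \<Rightarrow> 'a) \<Rightarrow> bool" where
  "monotone_op D F \<longleftrightarrow> (\<forall>x\<in>D. \<forall>y\<in>D. inner (F x - F y) (x - y) \<ge> 0)"

definition VI_sol :: "('a::real_inner \<Rightarrow> 'a) \<Rightarrow> 'a set \<Rightarrow> 'a set" where
  "VI_sol F X = {x \<in> X. \<forall>y\<in>X. inner (F x) (y - x) \<ge> 0}"

definition gap :: "'a::real_inner \<Rightarrow> ('a \<Rightarrow> 'a) \<Rightarrow> 'a set \<Rightarrow> real" where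
  "gap z G S = (SUP x\<in>S. inner (G x) (z - x))"

definition weakly_sharp :: "('a::real_inner \<Rightarrow> 'a) \<Rightarrow> 'a set \<Rightarrow> 'a set \<Rightarrow> real \<Rightarrow> real \<Rightarrow> bool" where
  "weakly_sharp F X Q \<sigma> M \<longleftrightarrow>
     (\<forall>x\<in>Q. \<forall>y\<in>X. inner (F x) (y - x) \<ge> \<sigma> * (infdist y Q) powr M)"

end

theory Submission
  imports Defs
begin

lemma eg_alg:
  fixes w y xp u Gy Gw :: "'a::real_inner" and l :: real
  assumes h1: "inner (w - l *\<^sub>R Gy - xp) (u - xp) \<le> 0"
    and h2: "inner (w - l *\<^sub>R Gw - y) (xp - y) \<le> 0"
    and h3: "2 * l * inner (Gy - Gw) (y - xp) \<le> (norm (y - w))\<^sup>2 + (norm (y - xp))\<^sup>2"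
  shows "(norm (xp - u))\<^sup>2 \<le> (norm (w - u))\<^sup>2 - 2 * l * inner Gy (y - u)"
  using h1 h2 h3
  unfolding power2_norm_eq_inner inner_diff_left inner_diff_right inner_scaleR_left inner_scaleR_right
  by (simp add: inner_commute right_diff_distrib)

lemma inertial_id:
  fixes a b :: "'a::real_inner" and t :: real
  shows "(norm ((1 + t) *\<^sub>R a - t *\<^sub>R b))\<^sup>2 = (1 + t) * (norm a)\<^sup>2 - t * (norm b)\<^sup>2 + t * (1 + t) * (norm (a - b))\<^sup>2"
  unfolding power2_norm_eq_inner inner_diff_left inner_diff_right inner_scaleR_left inner_scaleR_right
  by (simp add: inner_commute algebra_simps)

lemma lip_term:
  fixes a b c :: "'a::real_inner" and l L :: real
  assumes "0 \<le> l" "l * L \<le> 1" "norm a \<le> L * norm b" "0 \<le> L"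
  shows "2 * l * inner a c \<le> (norm b)\<^sup>2 + (norm c)\<^sup>2"
proof -
  have c1: "inner a c \<le> norm a * norm c" by (metis Cauchy_Schwarz_ineq2 abs_le_iff)
  have c2: "norm a * norm c \<le> L * norm b * norm c"
    using assms(3) by (rule mult_right_mono) simp
  have c3: "l * (L * norm b * norm c) \<le> norm b * norm c"
  proof -
    have "l * (L * norm b * norm c) = (l * L) * (norm b * norm c)" by (simp add: mult.assoc)
    also have "\<dots> \<le> 1 * (norm b * norm c)"
      by (rule mult_right_mono) (use assms(2) in auto)
    finally show ?thesis by simp
  qed
  have c4: "2 * (norm b * norm c) \<le> (norm b)\<^sup>2 + (norm c)\<^sup>2"
    using sum_squares_bound[of "norm b" "norm c"] by (simp add: power2_eq_square)
  have "l * inner a c \<le> l * (L * norm b * norm c)"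
    using c1 c2 assms(1) by (meson mult_left_mono order_trans)
  then show ?thesis using c3 c4 by linarith
qed

theorem theorem3p12:
  fixes F H :: "'a::euclidean_space \<Rightarrow> 'a"
    and DomF DomH X \<Omega> :: "'a set"
    and LF LH \<eta> lam_lo lam_hi \<sigma> M :: real
    and \<alpha> lam :: "nat \<Rightarrow> real"
    and x w w' y :: "nat \<Rightarrow> 'a"
  assumes monoF: "monotone_op DomF F" and monoH: "monotone_op DomH H"
    and LF_pos: "LF > 0" and LH_pos: "LH > 0"
    and lipF: "LF-lipschitz_on DomF F" and lipH: "LH-lipschitz_on DomH H"
    and X_ne: "X \<noteq> {}" and X_compact: "compact X" and X_convex: "convex X"
    and \<Omega>_closed: "closed \<Omega>" and \<Omega>_convex: "convex \<Omega>"
    and X_sub: "X \<subseteq> \<Omega>" and \<Omega>_sub: "\<Omega> \<subseteq> DomF \<inter> DomH"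
    and Q_ne: "VI_sol F X \<noteq> {}"
    and x0: "x 0 \<in> X"
    and w_def: "\<And>k. w k = x k + \<alpha> k *\<^sub>R (x k - (if k = 0 then x 0 else x (k - 1)))"
    and w'_def: "\<And>k. w' k = closest_point \<Omega> (w k)"
    and y_def: "\<And>k. y k = closest_point X (w k - lam k *\<^sub>R (F (w' k) + \<eta> *\<^sub>R H (w' k)))"
    and x_def: "\<And>k. x (Suc k) = closest_point X (w k - lam k *\<^sub>R (F (y k) + \<eta> *\<^sub>R H (y k)))"
    and \<eta>_pos: "\<eta> > 0"
    and \<alpha>_nonneg: "\<And>k. \<alpha> k \<ge> 0"
    and \<alpha>0: "\<alpha> 0 \<le> 1"
    and \<alpha>_noninc: "\<And>k. \<alpha> (Suc k) \<le> \<alpha> k"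
    and lam_bounds: "\<And>k. lam_lo \<le> lam k \<and> lam k \<le> lam_hi"
    and lam_lo_pos: "0 < lam_lo" and lam_le: "lam_lo \<le> lam_hi"
    and lam_hi_le: "lam_hi \<le> 1 / (LF + \<eta> * LH)"
    and \<delta>_summable: "summable (\<lambda>k. \<alpha> k * (1 + \<alpha> k) * (norm (x k - (if k = 0 then x 0 else x (k - 1))))\<^sup>2)"
  shows
    "let Q = VI_sol F X;
         \<delta> = (\<lambda>k. \<alpha> k * (1 + \<alpha> k) * (norm (x k - (if k = 0 then x 0 else x (k - 1))))\<^sup>2);
         s = (\<Sum>k. \<delta> k);
         DX = diameter X;
         CH = (SUP z\<in>X. norm (H z));
         BH = (SUP z\<in>Q. norm (H z));
         ybar = (\<lambda>k. (1 / (\<Sum>j<k. lam j)) *\<^sub>R (\<Sum>j<k. lam j *\<^sub>R y j))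
     in (\<forall>k\<ge>1. - BH * infdist (ybar k) Q \<le> gap (ybar k) H Q
                \<and> gap (ybar k) H Q \<le> (1 / real k) * ((DX\<^sup>2 + s) / (2 * lam_lo * \<eta>)))
      \<and> (\<forall>k\<ge>1. 0 \<le> gap (ybar k) F X
                \<and> gap (ybar k) F X \<le> (1 / real k) * ((DX\<^sup>2 + s) / (2 * lam_lo))
                                        + \<eta> * (lam_hi * CH * DX / lam_lo))
      \<and> ((\<sigma> > 0 \<and> M \<ge> 1 \<and> weakly_sharp F X Q \<sigma> M) \<longrightarrow>
           (\<forall>k\<ge>1. gap (ybar k) H Q \<ge>
              - (BH / \<sigma> powr (1 / M)) *
                ((1 / real k) * ((DX\<^sup>2 + s) / (2 * lam_lo)) + \<eta> * (lam_hi * CH * DX / lam_lo)) powr (1 / M)))"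
proof -
  define Q where "Q = VI_sol F X"
  define xm where "xm = (\<lambda>k. if k = 0 then x 0 else x (k - 1))"
  define \<delta> where "\<delta> = (\<lambda>k. \<alpha> k * (1 + \<alpha> k) * (norm (x k - (if k = 0 then x 0 else x (k - 1))))\<^sup>2)"
  define s where "s = (\<Sum>k. \<delta> k)"
  define DX where "DX = diameter X"
  define CH where "CH = (SUP z\<in>X. norm (H z))"
  define BH where "BH = (SUP z\<in>Q. norm (H z))"
  define ybar where "ybar = (\<lambda>k. (1 / (\<Sum>j<k. lam j)) *\<^sub>R (\<Sum>j<k. lam j *\<^sub>R y j))"
  define G where "G = (\<lambda>z. F z + \<eta> *\<^sub>R H z)"
  define L where "L = LF + \<eta> * LH"
  define Lam where "Lam = (\<lambda>k. (\<Sum>j<k. lam j))"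
  have \<delta>_xm: "\<delta> k = \<alpha> k * (1 + \<alpha> k) * (norm (x k - xm k))\<^sup>2" for k
    by (simp add: \<delta>_def xm_def)
  have Xclosed: "closed X" using X_compact by (rule compact_imp_closed)
  have Xbdd: "bounded X" using X_compact by (rule compact_imp_bounded)
  have \<Omega>ne: "\<Omega> \<noteq> {}" using X_ne X_sub by blast
  have XDF: "X \<subseteq> DomF" and XDH: "X \<subseteq> DomH" using X_sub \<Omega>_sub by auto
  have yX: "y k \<in> X" for k
    unfolding y_def by (rule closest_point_in_set[OF Xclosed X_ne])
  have xX: "x k \<in> X" for k
  proof (cases k)
    case 0 then show ?thesis using x0 by simp
  next
    case (Suc m) then show ?thesis using closest_point_in_set[OF Xclosed X_ne] by (simp add: x_def)
  qed
  have xmX: "xm k \<in> X" for k by (simp add: xm_def xX)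
  have dX: "norm (a - b) \<le> DX" if "a \<in> X" "b \<in> X" for a b
    using diameter_bounded_bound[OF Xbdd that] by (simp add: DX_def dist_norm)
  have DX_nn: "0 \<le> DX" using dX[OF x0 x0] by simp
  have dX2: "(norm (a - b))\<^sup>2 \<le> DX\<^sup>2" if "a \<in> X" "b \<in> X" for a b
    using dX[OF that] by (simp add: power_mono)
  have \<delta>_nn: "0 \<le> \<delta> k" for k using \<alpha>_nonneg[of k] by (simp add: \<delta>_def)
  have \<delta>_sum: "summable \<delta>" using \<delta>_summable by (simp add: \<delta>_def)
  have s_nn: "0 \<le> s" unfolding s_def using \<delta>_sum \<delta>_nn by (simp add: suminf_nonneg)
  have \<delta>_part: "(\<Sum>j<K. \<delta> j) \<le> s" for K
    unfolding s_def by (rule sum_le_suminf[OF \<delta>_sum]) (auto simp: \<delta>_nn)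
  have lam_pos: "0 < lam k" for k using lam_bounds[of k] lam_lo_pos by linarith
  have L_pos: "0 < L" unfolding L_def using LF_pos LH_pos \<eta>_pos by (simp add: add_pos_pos)
  have lamL: "lam k * L \<le> 1" for k
  proof -
    have "lam k \<le> 1 / L" using lam_bounds[of k] lam_hi_le unfolding L_def by linarith
    then show ?thesis using L_pos by (simp add: field_simps)
  qed
  have monoG: "0 \<le> inner (G a - G b) (a - b)" if "a \<in> X" "b \<in> X" for a b
  proof -
    have "0 \<le> inner (F a - F b) (a - b)" using monoF that XDF unfolding monotone_op_def by blast
    moreover have "0 \<le> inner (H a - H b) (a - b)" using monoH that XDH unfolding monotone_op_def by blast
    moreover have "inner (G a - G b) (a - b) = inner (F a - F b) (a - b) + \<eta> * inner (H a - H b) (a - b)"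
      by (simp add: G_def algebra_simps inner_add_left inner_diff_left)
    ultimately show ?thesis using \<eta>_pos by simp
  qed
  have lipG: "norm (G a - G b) \<le> L * norm (a - b)" if "a \<in> \<Omega>" "b \<in> \<Omega>" for a b
  proof -
    have "norm (F a - F b) \<le> LF * norm (a - b)"
      using lipschitz_onD[OF lipF, of a b] that \<Omega>_sub by (auto simp: dist_norm)
    moreover have "norm (H a - H b) \<le> LH * norm (a - b)"
      using lipschitz_onD[OF lipH, of a b] that \<Omega>_sub by (auto simp: dist_norm)
    moreover have "G a - G b = (F a - F b) + \<eta> *\<^sub>R (H a - H b)"
      by (simp add: G_def algebra_simps)
    moreover have "norm ((F a - F b) + \<eta> *\<^sub>R (H a - H b)) \<le> norm (F a - F b) + \<eta> * norm (H a - H b)"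
      using norm_triangle_ineq[of "F a - F b" "\<eta> *\<^sub>R (H a - H b)"] \<eta>_pos by simp
    ultimately show ?thesis unfolding L_def using \<eta>_pos
      by (smt (verit, best) mult_left_mono distrib_right mult.assoc)
  qed
  have step: "(norm (x (Suc k) - u))\<^sup>2 \<le> (norm (w k - u))\<^sup>2 - 2 * lam k * inner (G (y k)) (y k - u)"
    if uX: "u \<in> X" for u k
  proof (rule eg_alg)
    show "inner (w k - lam k *\<^sub>R G (y k) - x (Suc k)) (u - x (Suc k)) \<le> 0"
      unfolding x_def G_def by (rule closest_point_dot[OF X_convex Xclosed uX])
    show "inner (w k - lam k *\<^sub>R G (w' k) - y k) (x (Suc k) - y k) \<le> 0"
      unfolding y_def G_def by (rule closest_point_dot[OF X_convex Xclosed]) (simp add: x_def closest_point_in_set[OF Xclosed X_ne])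
    have yO: "y k \<in> \<Omega>" using yX X_sub by blast
    have wO: "w' k \<in> \<Omega>" unfolding w'_def by (rule closest_point_in_set[OF \<Omega>_closed \<Omega>ne])
    have "norm (y k - w' k) \<le> norm (y k - w k)"
      using closest_point_lipschitz[OF \<Omega>_convex \<Omega>_closed \<Omega>ne, of "y k" "w k"]
        closest_point_self[OF yO]
      by (simp add: w'_def dist_norm)
    then have "norm (G (y k) - G (w' k)) \<le> L * norm (y k - w k)"
      using lipG[OF yO wO] L_pos by (smt (verit) mult_left_mono)
    then show "2 * lam k * inner (G (y k) - G (w' k)) (y k - x (Suc k)) \<le> (norm (y k - w k))\<^sup>2 + (norm (y k - x (Suc k)))\<^sup>2"
      using lip_term[of "lam k" L] lam_pos[of k] lamL[of k] L_pos by simp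
  qed
  have inert: "(norm (w k - u))\<^sup>2 = (1 + \<alpha> k) * (norm (x k - u))\<^sup>2 - \<alpha> k * (norm (xm k - u))\<^sup>2 + \<delta> k" for u k
  proof -
    have "w k - u = (1 + \<alpha> k) *\<^sub>R (x k - u) - \<alpha> k *\<^sub>R (xm k - u)"
      by (simp add: w_def xm_def algebra_simps)
    then show ?thesis using inertial_id[of "\<alpha> k" "x k - u" "xm k - u"] by (simp add: \<delta>_xm)
  qed
  have induct: "2 * (\<Sum>j<K. lam j * inner (G (y j)) (y j - u)) + (norm (x K - u))\<^sup>2
      \<le> (norm (x 0 - u))\<^sup>2 + \<alpha> 0 * (DX\<^sup>2 - (norm (x 0 - u))\<^sup>2) - \<alpha> K * (DX\<^sup>2 - (norm (xm K - u))\<^sup>2) + (\<Sum>j<K. \<delta> j)"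
    if uX: "u \<in> X" for u K
  proof (induction K)
    case 0 then show ?case by (simp add: xm_def)
  next
    case (Suc K)
    have st: "(norm (x (Suc K) - u))\<^sup>2 \<le> (1 + \<alpha> K) * (norm (x K - u))\<^sup>2 - \<alpha> K * (norm (xm K - u))\<^sup>2 + \<delta> K - 2 * lam K * inner (G (y K)) (y K - u)"
      using step[OF uX, of K] inert[of K u] by simp
    have m: "0 \<le> (\<alpha> K - \<alpha> (Suc K)) * (DX\<^sup>2 - (norm (x K - u))\<^sup>2)"
      using \<alpha>_noninc[of K] dX2[OF xX uX] by simp
    have xmS: "xm (Suc K) = x K" by (simp add: xm_def)
    show ?case using Suc.IH st m unfolding xmS by (simp add: algebra_simps)
  qed
  have key: "2 * (\<Sum>j<K. lam j * inner (G (y j)) (y j - u)) \<le> DX\<^sup>2 + s" if uX: "u \<in> X" for u K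
  proof -
    have a: "0 \<le> \<alpha> K * (DX\<^sup>2 - (norm (xm K - u))\<^sup>2)"
      using \<alpha>_nonneg[of K] dX2[OF xmX uX] by simp
    have b: "(norm (x 0 - u))\<^sup>2 + \<alpha> 0 * (DX\<^sup>2 - (norm (x 0 - u))\<^sup>2) \<le> DX\<^sup>2"
    proof -
      have "(norm (x 0 - u))\<^sup>2 + \<alpha> 0 * (DX\<^sup>2 - (norm (x 0 - u))\<^sup>2)
          = (1 - \<alpha> 0) * (norm (x 0 - u))\<^sup>2 + \<alpha> 0 * DX\<^sup>2" by (simp add: algebra_simps)
      also have "\<dots> \<le> (1 - \<alpha> 0) * DX\<^sup>2 + \<alpha> 0 * DX\<^sup>2"
        using \<alpha>0 dX2[OF x0 uX] by (simp add: mult_left_mono)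
      finally show ?thesis by (simp add: algebra_simps)
    qed
    show ?thesis using induct[OF uX, of K] a b \<delta>_part[of K]
      by (smt (verit) zero_le_power2)
  qed
  have Lam_ge: "real K * lam_lo \<le> Lam K" for K
  proof -
    have "(\<Sum>j<K. lam_lo) \<le> (\<Sum>j<K. lam j)" by (rule sum_mono) (use lam_bounds in auto)
    then show ?thesis by (simp add: Lam_def)
  qed
  have Lam_pos: "0 < Lam K" if "1 \<le> K" for K
  proof -
    have "0 < real K * lam_lo" using that lam_lo_pos by simp
    then show ?thesis using Lam_ge[of K] by linarith
  qed
  have ybar_eq: "ybar K - u = (1 / Lam K) *\<^sub>R (\<Sum>j<K. lam j *\<^sub>R (y j - u))" if "1 \<le> K" for K u
  proof -
    have "(\<Sum>j<K. lam j *\<^sub>R (y j - u)) = (\<Sum>j<K. lam j *\<^sub>R y j) - Lam K *\<^sub>R u"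
      by (simp add: Lam_def scaleR_diff_right sum_subtractf scaleR_sum_left)
    then show ?thesis using Lam_pos[OF that]
      by (simp add: ybar_def Lam_def scaleR_diff_right)
  qed
  have inner_ybar: "inner v (ybar K - u) = (\<Sum>j<K. lam j * inner v (y j - u)) / Lam K" if "1 \<le> K" for K u v
    unfolding ybar_eq[OF that] by (simp add: inner_sum_right)
  have ybarX: "ybar K \<in> X" if "1 \<le> K" for K
  proof -
    have "(\<Sum>j<K. (lam j / Lam K) *\<^sub>R y j) \<in> X"
    proof (rule convex_sum[OF _ X_convex])
      show "(\<Sum>i<K. lam i / Lam K) = 1" using Lam_pos[OF that]
        by (simp add: sum_divide_distrib[symmetric] Lam_def)
    qed (use lam_pos Lam_pos[OF that] yX in \<open>auto simp: less_imp_le\<close>)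
    moreover have "(\<Sum>j<K. (lam j / Lam K) *\<^sub>R y j) = ybar K"
      by (simp add: ybar_def Lam_def scaleR_sum_right divide_inverse_commute)
    ultimately show ?thesis by simp
  qed
  have HcontX: "continuous_on X H"
    using lipschitz_on_continuous_on[OF lipH] XDH continuous_on_subset by blast
  have FcontX: "continuous_on X F"
    using lipschitz_on_continuous_on[OF lipF] XDF continuous_on_subset by blast
  have "bounded (H ` X)" using compact_continuous_image[OF HcontX X_compact] compact_imp_bounded by blast
  then obtain bH where bH: "\<And>z. z \<in> X \<Longrightarrow> norm (H z) \<le> bH" unfolding bounded_iff by blast
  have QX: "Q \<subseteq> X" unfolding Q_def VI_sol_def by auto
  have Qne: "Q \<noteq> {}" using Q_ne Q_def by simp
  have bddX: "bdd_above ((\<lambda>z. norm (H z)) ` X)" using bH by (meson bdd_aboveI2)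
  have bddQ: "bdd_above ((\<lambda>z. norm (H z)) ` Q)" using bH QX by (meson bdd_aboveI2 subsetD)
  have CHb: "norm (H z) \<le> CH" if "z \<in> X" for z unfolding CH_def by (rule cSUP_upper[OF that bddX])
  have BHb: "norm (H z) \<le> BH" if "z \<in> Q" for z unfolding BH_def by (rule cSUP_upper[OF that bddQ])
  have CH_nn: "0 \<le> CH" using CHb[OF x0] by (meson norm_ge_zero order_trans)
  obtain q0 where q0: "q0 \<in> Q" using Qne by blast
  have BH_nn: "0 \<le> BH" using BHb[OF q0] by (meson norm_ge_zero order_trans)
  have Qclosed: "closed Q"
  proof -
    have "Q = (\<Inter>v\<in>X. {z \<in> X. 0 \<le> inner (F z) (v - z)})"
      unfolding Q_def VI_sol_def using X_ne by auto
    moreover have "closed {z \<in> X. 0 \<le> inner (F z) (v - z)}" for v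
      by (rule continuous_on_closed_Collect_le[OF _ _ Xclosed])
         (auto intro!: continuous_intros FcontX)
    ultimately show ?thesis by auto
  qed
  define UA where "UA = (\<lambda>k::nat. (1 / real k) * ((DX\<^sup>2 + s) / (2 * lam_lo * \<eta>)))"
  define UB where "UB = (\<lambda>k::nat. (1 / real k) * ((DX\<^sup>2 + s) / (2 * lam_lo)) + \<eta> * (lam_hi * CH * DX / lam_lo))"
  have divb: "c / Lam K \<le> (1 / real K) * (c / lam_lo)" if "1 \<le> K" "0 \<le> c" for K c
  proof -
    have "0 < real K * lam_lo" using that lam_lo_pos by simp
    then have "c / Lam K \<le> c / (real K * lam_lo)"
      using Lam_ge[of K] that(2) by (simp add: divide_left_mono)
    then show ?thesis by simp
  qed
  have upA: "inner (H p) (ybar K - p) \<le> UA K" if "1 \<le> K" "p \<in> Q" for K p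
  proof -
    have pX: "p \<in> X" using that QX by blast
    have each: "lam j * (\<eta> * inner (H p) (y j - p)) \<le> lam j * inner (G (y j)) (y j - p)" for j
    proof -
      have "inner (G p) (y j - p) \<le> inner (G (y j)) (y j - p)"
        using monoG[OF yX pX, of j] by (simp add: inner_diff_left)
      moreover have "0 \<le> inner (F p) (y j - p)" using that(2) yX unfolding Q_def VI_sol_def by blast
      moreover have "inner (G p) (y j - p) = inner (F p) (y j - p) + \<eta> * inner (H p) (y j - p)"
        by (simp add: G_def inner_add_left)
      ultimately show ?thesis using lam_pos[of j] by (simp add: mult_left_mono)
    qed
    have "\<eta> * (\<Sum>j<K. lam j * inner (H p) (y j - p)) \<le> (\<Sum>j<K. lam j * inner (G (y j)) (y j - p))"
      using sum_mono[of "{..<K}", OF each] by (simp add: sum_distrib_left algebra_simps)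
    then have "\<eta> * (\<Sum>j<K. lam j * inner (H p) (y j - p)) \<le> (DX\<^sup>2 + s) / 2"
      using key[OF pX, of K] by simp
    then have "(\<Sum>j<K. lam j * inner (H p) (y j - p)) \<le> ((DX\<^sup>2 + s) / (2 * \<eta>))"
      using \<eta>_pos by (simp add: field_simps)
    then have "(\<Sum>j<K. lam j * inner (H p) (y j - p)) / Lam K \<le> ((DX\<^sup>2 + s) / (2 * \<eta>)) / Lam K"
      using Lam_pos[OF that(1)] by (intro divide_right_mono) auto
    then have "inner (H p) (ybar K - p) \<le> ((DX\<^sup>2 + s) / (2 * \<eta>)) / Lam K"
      by (simp only: inner_ybar[OF that(1)])
    also have "\<dots> \<le> (1 / real K) * (((DX\<^sup>2 + s) / (2 * \<eta>)) / lam_lo)"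
      by (rule divb[OF that(1)]) (use s_nn \<eta>_pos in simp)
    also have "\<dots> = UA K" by (simp add: UA_def field_simps)
    finally show ?thesis .
  qed
  have upB: "inner (F u) (ybar K - u) \<le> UB K" if "1 \<le> K" "u \<in> X" for K u
  proof -
    have each: "lam j * inner (F u) (y j - u) \<le> lam j * inner (G (y j)) (y j - u) + lam j * (\<eta> * (CH * DX))" for j
    proof -
      have "inner (F u) (y j - u) \<le> inner (F (y j)) (y j - u)"
        using monoF yX[of j] that(2) XDF unfolding monotone_op_def
        by (metis (no_types, lifting) inner_diff_left subsetD diff_ge_0_iff_ge)
      moreover have "inner (G (y j)) (y j - u) = inner (F (y j)) (y j - u) + \<eta> * inner (H (y j)) (y j - u)"
        by (simp add: G_def inner_add_left)
      moreover have "- (\<eta> * inner (H (y j)) (y j - u)) \<le> \<eta> * (CH * DX)"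
      proof -
        have "\<bar>inner (H (y j)) (y j - u)\<bar> \<le> norm (H (y j)) * norm (y j - u)" by (rule Cauchy_Schwarz_ineq2)
        also have "\<dots> \<le> CH * DX" using CHb[OF yX] dX[OF yX that(2)] CH_nn by (simp add: mult_mono)
        finally have "- inner (H (y j)) (y j - u) \<le> CH * DX" by linarith
        then have "\<eta> * (- inner (H (y j)) (y j - u)) \<le> \<eta> * (CH * DX)"
          using \<eta>_pos by (intro mult_left_mono) auto
        then show ?thesis by simp
      qed
      ultimately have "inner (F u) (y j - u) \<le> inner (G (y j)) (y j - u) + \<eta> * (CH * DX)"
        by linarith
      then show ?thesis using lam_pos[of j] by (simp add: mult_left_mono flip: distrib_left)
    qed
    have "(\<Sum>j<K. lam j * inner (F u) (y j - u)) \<le> (\<Sum>j<K. lam j * inner (G (y j)) (y j - u)) + Lam K * (\<eta> * (CH * DX))"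
      using sum_mono[of "{..<K}", OF each] by (simp add: sum.distrib Lam_def sum_distrib_right)
    also have "\<dots> \<le> (DX\<^sup>2 + s) / 2 + Lam K * (\<eta> * (CH * DX))"
      using key[OF that(2), of K] by simp
    finally have "(\<Sum>j<K. lam j * inner (F u) (y j - u)) / Lam K \<le> ((DX\<^sup>2 + s) / 2 + Lam K * (\<eta> * (CH * DX))) / Lam K"
      using Lam_pos[OF that(1)] by (intro divide_right_mono) auto
    then have "inner (F u) (ybar K - u) \<le> ((DX\<^sup>2 + s) / 2 + Lam K * (\<eta> * (CH * DX))) / Lam K"
      by (simp only: inner_ybar[OF that(1)])
    also have "\<dots> = ((DX\<^sup>2 + s) / 2) / Lam K + \<eta> * (CH * DX)"
      using Lam_pos[OF that(1)] by (simp add: field_simps)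
    also have "\<dots> \<le> (1 / real K) * (((DX\<^sup>2 + s) / 2) / lam_lo) + \<eta> * (CH * DX)"
      using divb[OF that(1), of "(DX\<^sup>2 + s) / 2"] s_nn by simp
    also have "\<dots> \<le> UB K"
    proof -
      have "CH * DX \<le> lam_hi * CH * DX / lam_lo"
      proof -
        have "lam_lo * (CH * DX) \<le> lam_hi * (CH * DX)"
          using lam_le CH_nn DX_nn by (simp add: mult_right_mono)
        then show ?thesis using lam_lo_pos by (simp add: field_simps)
      qed
      then have "\<eta> * (CH * DX) \<le> \<eta> * (lam_hi * CH * DX / lam_lo)"
        using \<eta>_pos by (intro mult_left_mono) auto
      then show ?thesis unfolding UB_def by simp
    qed
    finally show ?thesis .
  qed
  have bddA: "bdd_above ((\<lambda>p. inner (H p) (ybar K - p)) ` Q)" if "1 \<le> K" for K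
    using upA[OF that] by (meson bdd_aboveI2)
  have bddB: "bdd_above ((\<lambda>u. inner (F u) (ybar K - u)) ` X)" if "1 \<le> K" for K
    using upB[OF that] by (meson bdd_aboveI2)
  have gapA_up: "gap (ybar K) H Q \<le> UA K" if "1 \<le> K" for K
    unfolding gap_def by (rule cSUP_least[OF Qne]) (rule upA[OF that])
  have gapB_up: "gap (ybar K) F X \<le> UB K" if "1 \<le> K" for K
    unfolding gap_def by (rule cSUP_least[OF X_ne]) (rule upB[OF that])
  have gapB_ge: "inner (F u) (ybar K - u) \<le> gap (ybar K) F X" if "1 \<le> K" "u \<in> X" for K u
    unfolding gap_def by (rule cSUP_upper[OF that(2) bddB[OF that(1)]])
  have gapB_lo: "0 \<le> gap (ybar K) F X" if "1 \<le> K" for K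
    using gapB_ge[OF that ybarX[OF that]] by simp
  have gapA_lo: "- BH * infdist (ybar K) Q \<le> gap (ybar K) H Q" if "1 \<le> K" for K
  proof -
    obtain p where p: "p \<in> Q" "infdist (ybar K) Q = dist (ybar K) p"
      using infdist_attains_inf[OF Qclosed Qne] by blast
    have g: "inner (H p) (ybar K - p) \<le> gap (ybar K) H Q"
      unfolding gap_def by (rule cSUP_upper[OF p(1) bddA[OF that]])
    have "\<bar>inner (H p) (ybar K - p)\<bar> \<le> norm (H p) * norm (ybar K - p)" by (rule Cauchy_Schwarz_ineq2)
    moreover have "norm (H p) * norm (ybar K - p) \<le> BH * norm (ybar K - p)"
      using BHb[OF p(1)] by (simp add: mult_right_mono)
    ultimately have "- (BH * norm (ybar K - p)) \<le> inner (H p) (ybar K - p)" by linarith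
    then show ?thesis using g p(2) by (simp add: dist_norm)
  qed
  have partc: "gap (ybar K) H Q \<ge> - (BH / \<sigma> powr (1 / M)) * (UB K) powr (1 / M)"
    if "1 \<le> K" and hyp: "\<sigma> > 0 \<and> M \<ge> 1 \<and> weakly_sharp F X Q \<sigma> M" for K
  proof -
    have \<sigma>: "0 < \<sigma>" and M: "1 \<le> M" and ws: "weakly_sharp F X Q \<sigma> M" using hyp by auto
    define d where "d = infdist (ybar K) Q"
    have d_nn: "0 \<le> d" unfolding d_def by (rule infdist_nonneg)
    have "\<sigma> * d powr M \<le> inner (F q0) (ybar K - q0)"
      using ws q0 ybarX[OF that(1)] unfolding weakly_sharp_def d_def by blast
    also have "\<dots> \<le> gap (ybar K) F X" using gapB_ge[OF that(1)] q0 QX by blast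
    also have "\<dots> \<le> UB K" by (rule gapB_up[OF that(1)])
    finally have "d powr M \<le> UB K / \<sigma>" using \<sigma> by (simp add: field_simps)
    then have "(d powr M) powr (1 / M) \<le> (UB K / \<sigma>) powr (1 / M)"
      using M by (intro powr_mono2) auto
    moreover have "(d powr M) powr (1 / M) = d"
      using M d_nn by (simp add: powr_powr powr_one)
    moreover have "(UB K / \<sigma>) powr (1 / M) = UB K powr (1 / M) / \<sigma> powr (1 / M)"
      by (rule powr_divide)
    ultimately have dle: "d \<le> UB K powr (1 / M) / \<sigma> powr (1 / M)" by simp
    have "BH * d \<le> BH * (UB K powr (1 / M) / \<sigma> powr (1 / M))"
      using dle BH_nn by (rule mult_left_mono)
    then have "- (BH / \<sigma> powr (1 / M)) * (UB K) powr (1 / M) \<le> - BH * d" by simp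
    also have "\<dots> \<le> gap (ybar K) H Q" unfolding d_def by (rule gapA_lo[OF that(1)])
    finally show ?thesis .
  qed
  have final: "(\<forall>k\<ge>1. - BH * infdist (ybar k) Q \<le> gap (ybar k) H Q \<and> gap (ybar k) H Q \<le> UA k)
      \<and> (\<forall>k\<ge>1. 0 \<le> gap (ybar k) F X \<and> gap (ybar k) F X \<le> UB k)
      \<and> ((\<sigma> > 0 \<and> M \<ge> 1 \<and> weakly_sharp F X Q \<sigma> M) \<longrightarrow>
           (\<forall>k\<ge>1. gap (ybar k) H Q \<ge> - (BH / \<sigma> powr (1 / M)) * (UB k) powr (1 / M)))"
    using gapA_lo gapA_up gapB_lo gapB_up partc by blast
  show ?thesis unfolding Let_def
    using final unfolding UA_def UB_def Q_def s_def \<delta>_def DX_def CH_def BH_def ybar_def .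
qed

end
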